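(* Let $r\ge 2$ and $s_r\ge\cdots\ge s_1\ge 2$ be integers, $\alpha$ a real number with $0\le \alpha<1/s_1$, $s:=s_1+\cdots+s_r$, and $\mathbb{K}:=K^r_{s_1,\ldots,s_r}$. There is $n_0$ such that for all $n\ge n_0$ the following holds. If $\mathcal{H}$ is an $m$ by $n$ semibipartite $r$-graph on $V_1,V_2$ satisfying $$m \le \frac{(1-\alpha s_1)s_1}{(r-1)(s-s_1)}\,n \quad\text{and}\quad d_{\mathcal{H}}(v)\ge (1-\alpha)\binom{n}{r-1}\ \text{for all } v\in V_1,$$ then $\mathcal{H}$ contains $\lfloor m/s_1\rfloor$ pairwise vertex-disjoint ordered copies of $\mathbb{K}$.
   Context: An $r$-graph is a set of $r$-element subsets (edges) of a finite vertex set; $d_{\mathcal{H}}(v)$ is the number of edges containing $v$. An $m$ by $n$ semibipartite $r$-graph on $V_1,V_2$ has vertex set $V_1\cup V_2$ (disjoint), $|V_1|=m$, $|V_2|=n$, and every edge contains exactly one vertex of $V_1$. $K^r_{s_1,\ldots,s_r}$ is the complete $r$-partite $r$-graph with parts $W_1,\ldots,W_r$ of sizes $s_1,\ldots,s_r$. An ordered copy of it in a semibipartite $r$-graph on $V_1,V_2$ is a copy with $W_1\subseteq V_1$ and $W_2,\ldots,W_r\subseteq V_2$. *)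

theory Defs
  imports Complex_Main
begin

definition r_graph :: "nat \<Rightarrow> 'a set \<Rightarrow> 'a set set \<Rightarrow> bool" where
  "r_graph r V H \<longleftrightarrow> finite V \<and> (\<forall>e\<in>H. e \<subseteq> V \<and> card e = r)"

definition degree :: "'a set set \<Rightarrow> 'a \<Rightarrow> nat" where
  "degree H v = card {e \<in> H. v \<in> e}"

definition semibipartite :: "nat \<Rightarrow> nat \<Rightarrow> nat \<Rightarrow> 'a set \<Rightarrow> 'a set \<Rightarrow> 'a set set \<Rightarrow> bool" where
  "semibipartite r m n V1 V2 H \<longleftrightarrow>
     finite V1 \<and> finite V2 \<and> V1 \<inter> V2 = {} \<and> card V1 = m \<and> card V2 = n \<and>
     r_graph r (V1 \<union> V2) H \<and> (\<forall>e\<in>H. card (e \<inter> V1) = 1)"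

text \<open>An ordered copy of the complete r-partite r-graph K^r_{s_1,...,s_r} in H:
  parts W 0, ..., W (r-1) (W 0 plays the role of W_1) with card (W i) = s i,
  pairwise disjoint, W 0 in V1, the others in V2, and every transversal is an edge.\<close>
definition ordered_copy ::
  "nat \<Rightarrow> (nat \<Rightarrow> nat) \<Rightarrow> 'a set \<Rightarrow> 'a set \<Rightarrow> 'a set set \<Rightarrow> (nat \<Rightarrow> 'a set) \<Rightarrow> bool" where
  "ordered_copy r s V1 V2 H W \<longleftrightarrow>
     (\<forall>i<r. finite (W i) \<and> card (W i) = s i) \<and>
     (\<forall>i<r. \<forall>j<r. i \<noteq> j \<longrightarrow> W i \<inter> W j = {}) \<and>
     W 0 \<subseteq> V1 \<and> (\<forall>i. 1 \<le> i \<and> i < r \<longrightarrow> W i \<subseteq> V2) \<and>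
     (\<forall>f. (\<forall>i<r. f i \<in> W i) \<longrightarrow> f ` {..<r} \<in> H)"

definition copy_vertices :: "nat \<Rightarrow> (nat \<Rightarrow> 'a set) \<Rightarrow> 'a set" where
  "copy_vertices r W = (\<Union>i<r. W i)"

definition has_disjoint_ordered_copies ::
  "nat \<Rightarrow> (nat \<Rightarrow> nat) \<Rightarrow> nat \<Rightarrow> 'a set \<Rightarrow> 'a set \<Rightarrow> 'a set set \<Rightarrow> bool" where
  "has_disjoint_ordered_copies r s k V1 V2 H \<longleftrightarrow>
     (\<exists>Ws :: nat \<Rightarrow> nat \<Rightarrow> 'a set.
        (\<forall>j<k. ordered_copy r s V1 V2 H (Ws j)) \<and>
        (\<forall>j<k. \<forall>j'<k. j \<noteq> j' \<longrightarrow> copy_vertices r (Ws j) \<inter> copy_vertices r (Ws j') = {}))"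

end

theory Submission
  imports Defs "HOL-Combinatorics.Multiset_Permutations"
begin

lemma cheb_term:
  fixes x y :: real assumes "x \<ge> 0" "y \<ge> 0"
  shows "(x^t - y^t) * (x - y) \<ge> 0"
proof (cases "x \<le> y")
  case True
  then have "x^t \<le> y^t" using assms power_mono by blast
  then show ?thesis using True by (simp add: mult_nonpos_nonpos)
next
  case False
  then have "y^t \<le> x^t" using assms power_mono by (metis linorder_le_cases)
  then show ?thesis using False by simp
qed

lemma chebyshev_pow:
  fixes a :: "'b \<Rightarrow> real"
  assumes "finite Y" "\<And>y. y \<in> Y \<Longrightarrow> a y \<ge> 0"
  shows "(\<Sum>y\<in>Y. a y ^ t) * (\<Sum>y\<in>Y. a y) \<le> real (card Y) * (\<Sum>y\<in>Y. a y ^ Suc t)"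
proof -
  have "0 \<le> (\<Sum>i\<in>Y. \<Sum>j\<in>Y. (a i ^ t - a j ^ t) * (a i - a j))"
    by (intro sum_nonneg cheb_term) (auto intro: assms)
  also have "\<dots> = (\<Sum>i\<in>Y. \<Sum>j\<in>Y. a i ^ Suc t + a j ^ Suc t - a i ^ t * a j - a j ^ t * a i)"
    by (intro sum.cong refl) (simp add: algebra_simps)
  also have "\<dots> = (\<Sum>i\<in>Y. \<Sum>j\<in>Y. a i ^ Suc t) + (\<Sum>i\<in>Y. \<Sum>j\<in>Y. a j ^ Suc t)
      - (\<Sum>i\<in>Y. \<Sum>j\<in>Y. a i ^ t * a j) - (\<Sum>i\<in>Y. \<Sum>j\<in>Y. a j ^ t * a i)"
    by (simp add: sum.distrib sum_subtractf)
  also have "(\<Sum>i\<in>Y. \<Sum>j\<in>Y. a j ^ t * a i) = (\<Sum>y\<in>Y. a y ^ t) * (\<Sum>y\<in>Y. a y)"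
    by (subst sum.swap) (simp add: sum_product)
  also have "(\<Sum>i\<in>Y. \<Sum>j\<in>Y. a i ^ t * a j) = (\<Sum>y\<in>Y. a y ^ t) * (\<Sum>y\<in>Y. a y)"
    by (simp add: sum_product)
  also have "(\<Sum>i\<in>Y. \<Sum>j\<in>Y. a j ^ Suc t) = real (card Y) * (\<Sum>y\<in>Y. a y ^ Suc t)"
    by simp
  also have "(\<Sum>i\<in>Y. \<Sum>j\<in>Y. a i ^ Suc t) = real (card Y) * (\<Sum>y\<in>Y. a y ^ Suc t)"
    by (subst sum.swap) simp
  finally show ?thesis by (simp add: mult.commute)
qed

lemma power_mean:
  fixes a :: "'b \<Rightarrow> real"
  assumes "finite Y" "\<And>y. y \<in> Y \<Longrightarrow> a y \<ge> 0" "t \<ge> 1"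
  shows "(\<Sum>y\<in>Y. a y) ^ t \<le> real (card Y) ^ (t - 1) * (\<Sum>y\<in>Y. a y ^ t)"
  using assms(3)
proof (induction t rule: dec_induct)
  case base
  then show ?case by simp
next
  case (step t)
  have s0: "(\<Sum>y\<in>Y. a y) \<ge> 0" by (intro sum_nonneg assms(2))
  have "(\<Sum>y\<in>Y. a y) ^ Suc t = (\<Sum>y\<in>Y. a y) ^ t * (\<Sum>y\<in>Y. a y)" by simp
  also have "\<dots> \<le> real (card Y) ^ (t - 1) * (\<Sum>y\<in>Y. a y ^ t) * (\<Sum>y\<in>Y. a y)"
    using step.IH s0 by (rule mult_right_mono)
  also have "\<dots> \<le> real (card Y) ^ (t - 1) * (real (card Y) * (\<Sum>y\<in>Y. a y ^ Suc t))"
    unfolding mult.assoc by (intro mult_left_mono chebyshev_pow assms) auto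
  also have "\<dots> = real (card Y) ^ (Suc t - 1) * (\<Sum>y\<in>Y. a y ^ Suc t)"
    using step.hyps by (cases t) (auto simp: algebra_simps)
  finally show ?case .
qed

lemma prod_ge_pow_nat:
  assumes "t \<le> n"
  shows "(n - t) ^ t \<le> \<Prod>{n - t + 1..(n::nat)}"
proof -
  have "(n - t) ^ t = (\<Prod>i\<in>{n - t + 1..n}. n - t)"
    using assms by simp
  also have "\<dots> \<le> \<Prod>{n - t + 1..(n::nat)}"
    by (intro prod_mono) auto
  finally show ?thesis .
qed

lemma card_distinct_lists_ge:
  assumes "finite V" "t \<le> card V"
  shows "real (card V) ^ t - real t ^ 2 * real (card V) ^ (t - 1)
          \<le> real (card {xs. length xs = t \<and> distinct xs \<and> set xs \<subseteq> V})"
proof (cases "t = 0")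
  case True
  then have "{xs. length xs = t \<and> distinct xs \<and> set xs \<subseteq> V} = {[]}" by auto
  then show ?thesis using True by simp
next
  case False
  define n where "n = card V"
  have npos: "n > 0" using False assms n_def by simp
  have tn: "t \<le> n" using assms n_def by simp
  have c: "card {xs. length xs = t \<and> distinct xs \<and> set xs \<subseteq> V} = \<Prod>{n - t + 1..n}"
    using card_lists_distinct_length_eq[OF assms] n_def by simp
  have "real ((n - t) ^ t) \<le> real (\<Prod>{n - t + 1..n})"
    using prod_ge_pow_nat[of t n] tn by linarith
  moreover have "real ((n - t) ^ t) = real n ^ t * (1 + (- (real t / real n))) ^ t"
  proof -
    have "real (n - t) = real n * (1 + (- (real t / real n)))"
      using tn npos by (simp add: of_nat_diff field_simps)
    then show ?thesis by (simp add: power_mult_distrib)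
  qed
  moreover have "1 + real t * (- (real t / real n)) \<le> (1 + (- (real t / real n))) ^ t"
    using tn npos by (intro Bernoulli_inequality) simp
  moreover have "real n ^ t * (1 + real t * (- (real t / real n))) = real n ^ t - real t ^ 2 * real n ^ (t - 1)"
  proof -
    have "real n ^ t = real n * real n ^ (t - 1)" using False by (cases t) auto
    then show ?thesis using npos by (simp add: field_simps power2_eq_square)
  qed
  ultimately have "real n ^ t - real t ^ 2 * real n ^ (t - 1) \<le> real (\<Prod>{n - t + 1..n})"
    by (metis mult_left_mono zero_le_power of_nat_0_le_iff order_trans)
  then show ?thesis using c n_def by simp
qed

lemma card_filter_sum:
  assumes "finite A"
  shows "real (card {x\<in>A. P x}) = (\<Sum>x\<in>A. if P x then 1 else 0)"
proof -
  have "(\<Sum>x\<in>A. if P x then 1 else 0) = (\<Sum>x\<in>{x\<in>A. P x}. (1::real))"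
    using assms by (simp add: sum.If_cases Int_def)
  then show ?thesis by simp
qed

lemma erdos_lists:
  fixes k t :: nat
  assumes t1: "t \<ge> 1"
  shows "\<forall>c::real. c > 0 \<longrightarrow> (\<exists>N::nat. \<forall>(V::'a set) E. finite V \<and> N \<le> card V
     \<and> E \<subseteq> {xs. set xs \<subseteq> V \<and> length xs = k} \<and> c * real (card V) ^ k \<le> real (card E)
     \<longrightarrow> (\<exists>T. (\<forall>i<k. T i \<subseteq> V \<and> card (T i) = t)
            \<and> {xs. length xs = k \<and> (\<forall>i<k. xs ! i \<in> T i)} \<subseteq> E))"
proof (induction k)
  case 0
  show ?case
  proof (intro allI impI)
    fix c :: real assume c: "c > 0"
    show "\<exists>N::nat. \<forall>(V::'a set) E. finite V \<and> N \<le> card V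
     \<and> E \<subseteq> {xs. set xs \<subseteq> V \<and> length xs = 0} \<and> c * real (card V) ^ 0 \<le> real (card E)
     \<longrightarrow> (\<exists>T. (\<forall>i<0. T i \<subseteq> V \<and> card (T i) = t)
            \<and> {xs. length xs = 0 \<and> (\<forall>i<0. xs ! i \<in> T i)} \<subseteq> E)"
    proof (rule exI[of _ 0], intro allI impI)
      fix V :: "'a set" and E
      assume H: "finite V \<and> 0 \<le> card V \<and> E \<subseteq> {xs. set xs \<subseteq> V \<and> length xs = 0} \<and> c * real (card V) ^ 0 \<le> real (card E)"
      then have "card E > 0" using c by simp
      then have "E \<noteq> {}" by auto
      moreover have "E \<subseteq> {[]}" using H by auto
      ultimately have "[] \<in> E" by auto
      then show "\<exists>T. (\<forall>i<0. T i \<subseteq> V \<and> card (T i) = t)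
            \<and> {xs. length xs = 0 \<and> (\<forall>i<0. xs ! i \<in> T i)} \<subseteq> E" by auto
    qed
  qed
next
  case (Suc k)
  show ?case
  proof (intro allI impI)
    fix c :: real assume c: "c > 0"
    define c' where "c' = c ^ t / 2"
    have c'pos: "c' > 0" using c by (simp add: c'_def)
    from Suc.IH[rule_format, OF c'pos] obtain N' where N': "\<forall>(V::'a set) E. finite V \<and> N' \<le> card V
     \<and> E \<subseteq> {xs. set xs \<subseteq> V \<and> length xs = k} \<and> c' * real (card V) ^ k \<le> real (card E)
     \<longrightarrow> (\<exists>T. (\<forall>i<k. T i \<subseteq> V \<and> card (T i) = t)
            \<and> {xs. length xs = k \<and> (\<forall>i<k. xs ! i \<in> T i)} \<subseteq> E)" by (elim exE)
    define N where "N = max N' (t + nat \<lceil>2 * real t ^ 2 / c ^ t\<rceil> + 1)"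
    show "\<exists>N::nat. \<forall>(V::'a set) E. finite V \<and> N \<le> card V
     \<and> E \<subseteq> {xs. set xs \<subseteq> V \<and> length xs = Suc k} \<and> c * real (card V) ^ Suc k \<le> real (card E)
     \<longrightarrow> (\<exists>T. (\<forall>i<Suc k. T i \<subseteq> V \<and> card (T i) = t)
            \<and> {xs. length xs = Suc k \<and> (\<forall>i<Suc k. xs ! i \<in> T i)} \<subseteq> E)"
    proof (rule exI[of _ N], intro allI impI)
      fix V :: "'a set" and E
      assume H: "finite V \<and> N \<le> card V \<and> E \<subseteq> {xs. set xs \<subseteq> V \<and> length xs = Suc k}
         \<and> c * real (card V) ^ Suc k \<le> real (card E)"
      define n where "n = card V"
      have fin: "finite V" and EL: "E \<subseteq> {xs. set xs \<subseteq> V \<and> length xs = Suc k}"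
        and Ec: "c * real n ^ Suc k \<le> real (card E)" using H n_def by auto
      have nN': "N' \<le> n" and nt: "t \<le> n" and nbig: "2 * real t ^ 2 / c ^ t < real n"
        using H n_def unfolding N_def by linarith+
      have npos: "n > 0" using nt t1 by simp
      define Y where "Y = {xs. set xs \<subseteq> V \<and> length xs = k}"
      have finY: "finite Y" unfolding Y_def using fin by (simp add: finite_lists_length_eq)
      have cardY: "card Y = n ^ k" unfolding Y_def n_def using fin by (simp add: card_lists_length_eq)
      define Nb where "Nb y = {x\<in>V. x # y \<in> E}" for y
      have finNb: "finite (Nb y)" for y unfolding Nb_def using fin by simp
      have Eeq: "E = (\<lambda>(y, x). x # y) ` (SIGMA y:Y. Nb y)"
      proof
        show "E \<subseteq> (\<lambda>(y, x). x # y) ` (SIGMA y:Y. Nb y)"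
        proof
          fix xs assume "xs \<in> E"
          then obtain x ys where xs: "xs = x # ys" "set xs \<subseteq> V" "length ys = k"
            using EL by (cases xs) auto
          then have "(ys, x) \<in> (SIGMA y:Y. Nb y)" using \<open>xs \<in> E\<close> by (auto simp: Y_def Nb_def)
          then show "xs \<in> (\<lambda>(y, x). x # y) ` (SIGMA y:Y. Nb y)" using xs by force
        qed
        show "(\<lambda>(y, x). x # y) ` (SIGMA y:Y. Nb y) \<subseteq> E" by (auto simp: Nb_def)
      qed
      have inj: "inj_on (\<lambda>(y, x). x # y) (SIGMA y:Y. Nb y)" by (auto simp: inj_on_def)
      have cardE: "card E = (\<Sum>y\<in>Y. card (Nb y))"
        using Eeq card_image[OF inj] finY finNb by simp
      define S where "S = (\<Sum>y\<in>Y. real (card (Nb y)) ^ t)"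
      have pm: "(\<Sum>y\<in>Y. real (card (Nb y))) ^ t \<le> real (card Y) ^ (t - 1) * S"
        unfolding S_def by (rule power_mean[OF finY _ t1]) simp
      have "(c * real n ^ Suc k) ^ t \<le> (\<Sum>y\<in>Y. real (card (Nb y))) ^ t"
        using Ec cardE c by (intro power_mono) auto
      with pm have "(c * real n ^ Suc k) ^ t \<le> real n ^ (k * (t - 1)) * S"
        by (simp add: cardY power_mult)
      moreover have "(c * real n ^ Suc k) ^ t = real n ^ (k * (t - 1)) * (c ^ t * real n ^ (k + t))"
      proof -
        have "Suc k * t = k * (t - 1) + (k + t)" using t1 by (cases t) auto
        have "(c * real n ^ Suc k) ^ t = c ^ t * real n ^ (Suc k * t)"
          by (simp only: power_mult_distrib power_mult[symmetric] mult.commute)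
        also have "\<dots> = c ^ t * (real n ^ (k * (t - 1)) * real n ^ (k + t))"
          by (simp only: \<open>Suc k * t = k * (t - 1) + (k + t)\<close> power_add)
        finally show ?thesis by (simp add: algebra_simps)
      qed
      ultimately have Slow: "c ^ t * real n ^ (k + t) \<le> S"
        using npos by (simp add: mult_le_cancel_left_pos)
      define L where "L = {zs. set zs \<subseteq> V \<and> length zs = t}"
      have finL: "finite L" unfolding L_def using fin by (simp add: finite_lists_length_eq)
      have cardL: "card L = n ^ t" unfolding L_def n_def using fin by (simp add: card_lists_length_eq)
      define D where "D zs = card {y\<in>Y. set zs \<subseteq> Nb y}" for zs
      have "S = (\<Sum>y\<in>Y. \<Sum>zs\<in>L. if set zs \<subseteq> Nb y then 1 else 0)"
        unfolding S_def
      proof (intro sum.cong refl)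
        fix y assume "y \<in> Y"
        have "{zs. set zs \<subseteq> Nb y \<and> length zs = t} = {zs\<in>L. set zs \<subseteq> Nb y}"
          unfolding L_def Nb_def by auto
        then have "card (Nb y) ^ t = card {zs\<in>L. set zs \<subseteq> Nb y}"
          using card_lists_length_eq[OF finNb[of y], of t] by simp
        then show "real (card (Nb y)) ^ t = (\<Sum>zs\<in>L. if set zs \<subseteq> Nb y then 1 else 0)"
          using card_filter_sum[OF finL] by (metis of_nat_power)
      qed
      also have "\<dots> = (\<Sum>zs\<in>L. \<Sum>y\<in>Y. if set zs \<subseteq> Nb y then 1 else 0)"
        by (rule sum.swap)
      also have "\<dots> = (\<Sum>zs\<in>L. real (D zs))"
        unfolding D_def using card_filter_sum[OF finY] by simp
      finally have Seq: "S = (\<Sum>zs\<in>L. real (D zs))" .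
      define DL where "DL = {zs\<in>L. distinct zs}"
      have DLsub: "DL \<subseteq> L" unfolding DL_def by auto
      have "{xs. length xs = t \<and> distinct xs \<and> set xs \<subseteq> V} = DL" unfolding DL_def L_def by auto
      then have cardDL: "real n ^ t - real t ^ 2 * real n ^ (t - 1) \<le> real (card DL)"
        using card_distinct_lists_ge[OF fin, of t] nt n_def by simp
      have cardDL2: "card DL \<le> n ^ t" using card_mono[OF finL DLsub] cardL by simp
      have Dle: "D zs \<le> n ^ k" for zs
        unfolding D_def cardY[symmetric] by (rule card_mono[OF finY]) auto
      have "\<exists>zs\<in>DL. c' * real n ^ k \<le> real (D zs)"
      proof (rule ccontr)
        assume "\<not> ?thesis"
        then have lt: "\<And>zs. zs \<in> DL \<Longrightarrow> real (D zs) \<le> c' * real n ^ k" by force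
        have s0: "S = (\<Sum>zs\<in>DL. real (D zs)) + (\<Sum>zs\<in>L - DL. real (D zs))"
          using Seq finL DLsub by (simp add: sum.subset_diff)
        have s1: "(\<Sum>zs\<in>DL. real (D zs)) \<le> real (card DL) * (c' * real n ^ k)"
          using sum_mono[of DL "\<lambda>zs. real (D zs)" "\<lambda>_. c' * real n ^ k"] lt by simp
        have s2: "(\<Sum>zs\<in>L - DL. real (D zs)) \<le> real (card (L - DL)) * real n ^ k"
          using sum_mono[of "L - DL" "\<lambda>zs. real (D zs)" "\<lambda>_. real n ^ k"] Dle
          by (simp del: of_nat_power add: of_nat_power[symmetric])
        have s3: "real (card (L - DL)) = real n ^ t - real (card DL)"
          using card_Diff_subset[OF _ DLsub] finL DLsub cardL cardDL2
          by (simp add: finite_subset of_nat_diff)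
        have "S \<le> real (card DL) * (c' * real n ^ k) + (real n ^ t - real (card DL)) * real n ^ k"
          using s0 s1 s2 s3 by simp
        also have "\<dots> \<le> real n ^ t * (c' * real n ^ k) + (real t ^ 2 * real n ^ (t - 1)) * real n ^ k"
        proof (intro add_mono mult_right_mono)
          show "real (card DL) \<le> real n ^ t" using cardDL2 by (metis of_nat_le_iff of_nat_power)
        qed (use cardDL c'pos in auto)
        finally have "c ^ t * real n ^ (k + t) \<le> real n ^ t * (c' * real n ^ k) + (real t ^ 2 * real n ^ (t - 1)) * real n ^ k"
          using Slow by linarith
        moreover have "real n ^ t = real n * real n ^ (t - 1)" using t1 by (cases t) auto
        ultimately have "c ^ t * real n * (real n ^ (t - 1) * real n ^ k)
            \<le> (c' * real n + real t ^ 2) * (real n ^ (t - 1) * real n ^ k)"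
          by (simp add: power_add algebra_simps)
        then have "c ^ t * real n \<le> c' * real n + real t ^ 2"
          using npos by (simp add: mult_le_cancel_right_pos)
        then have "c ^ t * real n \<le> 2 * real t ^ 2" unfolding c'_def by simp
        moreover have "2 * real t ^ 2 < c ^ t * real n" using nbig c by (simp add: field_simps)
        ultimately show False by simp
      qed
      then obtain zs where zs: "zs \<in> DL" "c' * real n ^ k \<le> real (D zs)" by blast
      define E' where "E' = {y\<in>Y. set zs \<subseteq> Nb y}"
      have "finite V \<and> N' \<le> card V \<and> E' \<subseteq> {xs. set xs \<subseteq> V \<and> length xs = k} \<and> c' * real (card V) ^ k \<le> real (card E')"
        using fin nN' zs(2) n_def unfolding E'_def D_def Y_def by auto
      from N'[rule_format, OF this] obtain T' where T': "\<forall>i<k. T' i \<subseteq> V \<and> card (T' i) = t"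
        "{xs. length xs = k \<and> (\<forall>i<k. xs ! i \<in> T' i)} \<subseteq> E'" by blast
      define T where "T i = (if i = 0 then set zs else T' (i - 1))" for i
      have zsL: "set zs \<subseteq> V" "length zs = t" "distinct zs" using zs(1) unfolding DL_def L_def by auto
      show "\<exists>T. (\<forall>i<Suc k. T i \<subseteq> V \<and> card (T i) = t)
            \<and> {xs. length xs = Suc k \<and> (\<forall>i<Suc k. xs ! i \<in> T i)} \<subseteq> E"
      proof (rule exI[of _ T], rule conjI)
        show "\<forall>i<Suc k. T i \<subseteq> V \<and> card (T i) = t"
        proof (intro allI impI)
          fix i assume "i < Suc k"
          then show "T i \<subseteq> V \<and> card (T i) = t"
            using T'(1) zsL by (cases i) (auto simp: T_def distinct_card)
        qed
      next
        show "{xs. length xs = Suc k \<and> (\<forall>i<Suc k. xs ! i \<in> T i)} \<subseteq> E"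
        proof
          fix xs assume xs: "xs \<in> {xs. length xs = Suc k \<and> (\<forall>i<Suc k. xs ! i \<in> T i)}"
          then obtain x ys where xys: "xs = x # ys" "length ys = k" by (cases xs) auto
          have "x \<in> set zs" using xs xys by (auto simp: T_def)
          moreover have "ys \<in> {xs. length xs = k \<and> (\<forall>i<k. xs ! i \<in> T' i)}"
          proof -
            have "\<forall>i<k. ys ! i \<in> T' i"
            proof (intro allI impI)
              fix i assume "i < k"
              then have "xs ! Suc i \<in> T (Suc i)" using xs by auto
              then show "ys ! i \<in> T' i" using xys by (simp add: T_def)
            qed
            then show ?thesis using xys by simp
          qed
          then have "ys \<in> E'" using T'(2) by blast
          ultimately show "xs \<in> E" using xys unfolding E'_def Nb_def by auto
        qed
      qed
    qed
  qed
qed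



definition good_lists :: "nat \<Rightarrow> 'a set \<Rightarrow> 'a set set \<Rightarrow> 'a set \<Rightarrow> 'a set \<Rightarrow> 'a list set" where
  "good_lists k V2 H A U = {xs. length xs = k \<and> distinct xs \<and> set xs \<subseteq> V2 - U \<and> (\<forall>v\<in>A. insert v (set xs) \<in> H)}"

lemma prod_disjoint:
  assumes "\<forall>i<k. card (T i) = t" "t \<ge> 1"
    and "{xs. length xs = k \<and> (\<forall>i<k. xs ! i \<in> T i)} \<subseteq> {xs. distinct xs}"
    and "i < k" "j < k" "i \<noteq> j"
  shows "T i \<inter> T j = {}"
proof (rule ccontr)
  assume "T i \<inter> T j \<noteq> {}"
  then obtain x where x: "x \<in> T i" "x \<in> T j" by auto
  have ne: "T l \<noteq> {}" if "l < k" for l using assms(1,2) that by fastforce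
  define xs where "xs = map (\<lambda>l. if l = i \<or> l = j then x else (SOME y. y \<in> T l)) [0..<k]"
  have "xs \<in> {xs. length xs = k \<and> (\<forall>i<k. xs ! i \<in> T i)}"
    unfolding xs_def using x ne by (auto simp: some_in_eq)
  then have "distinct xs" using assms(3) by blast
  moreover have "xs ! i = xs ! j" unfolding xs_def using assms(4,5) by simp
  moreover have "length xs = k" unfolding xs_def by simp
  ultimately show False using assms(4,5,6) by (auto simp: distinct_conv_nth)
qed

lemma find_copy:
  assumes r2: "r \<ge> 2" and A: "A \<subseteq> V1" "card A = s 0" "finite A"
    and st: "\<And>l. 1 \<le> l \<Longrightarrow> l < r \<Longrightarrow> s l \<le> t" and t1: "t \<ge> 1"
    and T: "\<forall>i<r-1. T i \<subseteq> V2 \<and> card (T i) = t"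
       "{xs. length xs = r - 1 \<and> (\<forall>i<r-1. xs ! i \<in> T i)} \<subseteq> good_lists (r-1) V2 H A U"
    and disj: "V1 \<inter> V2 = {}"
  shows "\<exists>W. ordered_copy r s V1 V2 H W \<and> W 0 = A \<and> (\<forall>l. 1 \<le> l \<and> l < r \<longrightarrow> W l \<subseteq> V2 - U)"
proof -
  define k where "k = r - 1"
  have Td: "T i \<inter> T j = {}" if "i < k" "j < k" "i \<noteq> j" for i j
    using prod_disjoint[of k T t i j] T that t1 unfolding k_def good_lists_def by auto
  have Tfin: "finite (T i)" if "i < k" for i using T that t1 unfolding k_def by (metis card.infinite not_one_le_zero)
  have "\<exists>X. X \<subseteq> T (l - 1) \<and> card X = s l \<and> finite X" if "1 \<le> l" "l < r" for l
  proof -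
    have "s l \<le> card (T (l - 1))" using st[OF that] T that unfolding k_def by auto
    then show ?thesis by (metis obtain_subset_with_card_n)
  qed
  then obtain W' where W': "\<And>l. 1 \<le> l \<Longrightarrow> l < r \<Longrightarrow> W' l \<subseteq> T (l - 1) \<and> card (W' l) = s l \<and> finite (W' l)"
    by metis
  define W where "W l = (if l = 0 then A else W' l)" for l
  have good: "{xs. length xs = k \<and> (\<forall>i<k. xs ! i \<in> T i)} \<subseteq> good_lists k V2 H A U"
    using T unfolding k_def by simp
  have Tsub: "T i \<subseteq> V2 - U" if "i < k" for i
  proof
    fix x assume x: "x \<in> T i"
    have ne: "T l \<noteq> {}" if "l < k" for l using T t1 that unfolding k_def by fastforce
    define xs where "xs = map (\<lambda>l. if l = i then x else (SOME y. y \<in> T l)) [0..<k]"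
    have "xs \<in> {xs. length xs = k \<and> (\<forall>i<k. xs ! i \<in> T i)}"
      unfolding xs_def using x ne by (auto simp: some_in_eq)
    then have "set xs \<subseteq> V2 - U" using good unfolding good_lists_def by blast
    moreover have "x \<in> set xs" unfolding xs_def using that by force
    ultimately show "x \<in> V2 - U" by blast
  qed
  have WV2: "W l \<subseteq> V2 - U" if "1 \<le> l" "l < r" for l
  proof -
    have "l - 1 < k" using that unfolding k_def by simp
    then show ?thesis using W'[OF that] Tsub[of "l - 1"] that by (auto simp: W_def)
  qed
  have "ordered_copy r s V1 V2 H W"
    unfolding ordered_copy_def
  proof (intro conjI allI impI)
    fix i assume "i < r"
    then show "finite (W i)" "card (W i) = s i" using W' A by (auto simp: W_def)
  next
    fix i j assume ij: "i < r" "j < r" "i \<noteq> j"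
    show "W i \<inter> W j = {}"
    proof (cases "i = 0 \<or> j = 0")
      case True
      then show ?thesis
      proof
        assume "i = 0"
        then have "j \<ge> 1" using ij by simp
        then have "W j \<subseteq> V2" using WV2[of j] ij by auto
        then show ?thesis using \<open>i = 0\<close> A disj ij by (auto simp: W_def)
      next
        assume "j = 0"
        then have "i \<ge> 1" using ij by simp
        then have "W i \<subseteq> V2" using WV2[of i] ij by auto
        then show ?thesis using \<open>j = 0\<close> A disj ij by (auto simp: W_def)
      qed
    next
      case False
      have "i - 1 < k" "j - 1 < k" "i - 1 \<noteq> j - 1" using ij False unfolding k_def by auto
      then have "T (i - 1) \<inter> T (j - 1) = {}" using Td by blast
      then show ?thesis using W'[of i] W'[of j] False ij by (auto simp: W_def)
    qed
  next
    show "W 0 \<subseteq> V1" using A by (simp add: W_def)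
  next
    fix i assume "1 \<le> i \<and> i < r"
    then show "W i \<subseteq> V2" using WV2[of i] by auto
  next
    fix f assume f: "\<forall>i<r. f i \<in> W i"
    define xs where "xs = map (\<lambda>i. f (Suc i)) [0..<k]"
    have "xs \<in> {xs. length xs = k \<and> (\<forall>i<k. xs ! i \<in> T i)}"
    proof -
      have "xs ! i \<in> T i" if "i < k" for i
      proof -
        have "f (Suc i) \<in> W (Suc i)" using f that unfolding k_def by auto
        moreover have "Suc i < r" using that unfolding k_def by simp
        ultimately show ?thesis using W'[of "Suc i"] that unfolding xs_def k_def W_def by auto
      qed
      then show ?thesis unfolding xs_def by auto
    qed
    then have "xs \<in> good_lists k V2 H A U" using good by blast
    moreover have "f 0 \<in> A" using f[rule_format, of 0] r2 by (simp add: W_def)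
    ultimately have "insert (f 0) (set xs) \<in> H" unfolding good_lists_def by blast
    moreover have "f ` {..<r} = insert (f 0) (set xs)"
    proof -
      have rk: "r = Suc k" unfolding k_def using r2 by simp
      have "{..<r} = insert 0 (Suc ` {..<k})" unfolding rk by (rule lessThan_Suc_eq_insert_0)
      then have "f ` {..<r} = insert (f 0) ((\<lambda>i. f (Suc i)) ` {..<k})" by (simp add: image_image)
      moreover have "set xs = (\<lambda>i. f (Suc i)) ` {..<k}" unfolding xs_def by (simp add: atLeast0LessThan)
      ultimately show ?thesis by simp
    qed
    ultimately show "f ` {..<r} \<in> H" by simp
  qed
  moreover have "\<forall>l. 1 \<le> l \<and> l < r \<longrightarrow> W l \<subseteq> V2 - U"
    using WV2 by blast
  moreover have "W 0 = A" by (simp add: W_def)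
  ultimately show ?thesis by blast
qed



lemma greedy:
  assumes disj: "V1 \<inter> V2 = {}" and r2: "r \<ge> 2"
    and step: "\<And>j U1 U2. j < M \<Longrightarrow> U1 \<subseteq> V1 \<Longrightarrow> U2 \<subseteq> V2 \<Longrightarrow> finite U1 \<Longrightarrow> finite U2
       \<Longrightarrow> card U1 \<le> j * s 0 \<Longrightarrow> card U2 \<le> j * (\<Sum>l\<in>{1..<r}. s l)
       \<Longrightarrow> \<exists>W. ordered_copy r s V1 V2 H W \<and> W 0 \<inter> U1 = {} \<and> (\<forall>l. 1 \<le> l \<and> l < r \<longrightarrow> W l \<inter> U2 = {})"
  shows "has_disjoint_ordered_copies r s M V1 V2 H"
proof -
  have "j \<le> M \<Longrightarrow> \<exists>Ws :: nat \<Rightarrow> nat \<Rightarrow> 'a set. (\<forall>i<j. ordered_copy r s V1 V2 H (Ws i)) \<and>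
        (\<forall>i<j. \<forall>i'<j. i \<noteq> i' \<longrightarrow> copy_vertices r (Ws i) \<inter> copy_vertices r (Ws i') = {})" for j
  proof (induction j)
    case 0
    then show ?case by auto
  next
    case (Suc j)
    then obtain Ws :: "nat \<Rightarrow> nat \<Rightarrow> 'a set" where Ws: "\<forall>i<j. ordered_copy r s V1 V2 H (Ws i)"
      "\<forall>i<j. \<forall>i'<j. i \<noteq> i' \<longrightarrow> copy_vertices r (Ws i) \<inter> copy_vertices r (Ws i') = {}" by auto
    have jM: "j < M" using Suc.prems by simp
    have oc: "\<And>i l. i < j \<Longrightarrow> l < r \<Longrightarrow> finite (Ws i l) \<and> card (Ws i l) = s l"
      "\<And>i. i < j \<Longrightarrow> Ws i 0 \<subseteq> V1" "\<And>i l. i < j \<Longrightarrow> 1 \<le> l \<Longrightarrow> l < r \<Longrightarrow> Ws i l \<subseteq> V2"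
      using Ws(1) unfolding ordered_copy_def by auto
    define U1 where "U1 = (\<Union>i<j. Ws i 0)"
    define U2 where "U2 = (\<Union>i<j. \<Union>l\<in>{1..<r}. Ws i l)"
    have U1V: "U1 \<subseteq> V1" unfolding U1_def using oc(2) by auto
    have U2V: "U2 \<subseteq> V2" unfolding U2_def using oc(3) by (auto simp del: One_nat_def) (meson in_mono)
    have finU1: "finite U1" unfolding U1_def using oc(1) r2 by auto
    have finU2: "finite U2" unfolding U2_def using oc(1) by auto
    have "card U1 \<le> (\<Sum>i<j. card (Ws i 0))" unfolding U1_def by (rule card_UN_le) simp
    also have "\<dots> = j * s 0" using oc(1) r2 by simp
    finally have cU1: "card U1 \<le> j * s 0" .
    have "card U2 \<le> (\<Sum>i<j. card (\<Union>l\<in>{1..<r}. Ws i l))" unfolding U2_def by (rule card_UN_le) simp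
    also have "\<dots> \<le> (\<Sum>i<j. \<Sum>l\<in>{1..<r}. card (Ws i l))"
      by (intro sum_mono card_UN_le) simp
    also have "\<dots> = (\<Sum>i<j. \<Sum>l\<in>{1..<r}. s l)"
      using oc(1) by (intro sum.cong refl) auto
    also have "\<dots> = j * (\<Sum>l\<in>{1..<r}. s l)" by simp
    finally have cU2: "card U2 \<le> j * (\<Sum>l\<in>{1..<r}. s l)" .
    obtain W where W: "ordered_copy r s V1 V2 H W" "W 0 \<inter> U1 = {}" "\<forall>l. 1 \<le> l \<and> l < r \<longrightarrow> W l \<inter> U2 = {}"
      using step[OF jM U1V U2V finU1 finU2 cU1 cU2] by blast
    have W0: "W 0 \<subseteq> V1" and Wl: "\<And>l. 1 \<le> l \<Longrightarrow> l < r \<Longrightarrow> W l \<subseteq> V2"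
      using W(1) unfolding ordered_copy_def by auto
    have new: "copy_vertices r W \<inter> copy_vertices r (Ws i) = {}" if "i < j" for i
    proof (rule ccontr)
      assume "copy_vertices r W \<inter> copy_vertices r (Ws i) \<noteq> {}"
      then obtain x a b where x: "a < r" "b < r" "x \<in> W a" "x \<in> Ws i b"
        unfolding copy_vertices_def by auto
      show False
      proof (cases "a = 0")
        case True
        show False
        proof (cases "b = 0")
          case True
          then show False using x \<open>a = 0\<close> W(2) that unfolding U1_def by auto
        next
          case False
          then show False using x \<open>a = 0\<close> W0 oc(3)[OF that, of b] disj by auto
        qed
      next
        case False
        show False
        proof (cases "b = 0")
          case True
          then show False using x \<open>a \<noteq> 0\<close> Wl[of a] oc(2)[OF that] disj by auto
        next
          case False
          then have "x \<in> U2" using x that unfolding U2_def by force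
          moreover have "W a \<inter> U2 = {}" using W(3) x \<open>a \<noteq> 0\<close> by simp
          ultimately show False using x by blast
        qed
      qed
    qed
    show ?case
    proof (rule exI[of _ "Ws(j := W)"], intro conjI allI impI)
      fix i assume "i < Suc j"
      then show "ordered_copy r s V1 V2 H ((Ws(j := W)) i)" using Ws(1) W(1) by (cases "i = j") auto
    next
      fix i i' assume "i < Suc j" "i' < Suc j" "i \<noteq> i'"
      then show "copy_vertices r ((Ws(j := W)) i) \<inter> copy_vertices r ((Ws(j := W)) i') = {}"
        using Ws(2) new by (cases "i = j"; cases "i' = j") (auto simp: Int_commute)
    qed
  qed
  then show ?thesis unfolding has_disjoint_ordered_copies_def by blast
qed



lemma card_dl_pred:
  assumes "finite V"
  shows "card {xs. length xs = k \<and> distinct xs \<and> set xs \<subseteq> V \<and> P (set xs)}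
         = fact k * card {e. e \<subseteq> V \<and> card e = k \<and> P e}"
proof -
  let ?I = "{e. e \<subseteq> V \<and> card e = k \<and> P e}"
  have finI: "finite ?I" by (rule finite_subset[of _ "Pow V"]) (auto simp: assms)
  have eq: "{xs. length xs = k \<and> distinct xs \<and> set xs \<subseteq> V \<and> P (set xs)} = (\<Union>e\<in>?I. permutations_of_set e)"
    by (auto simp: permutations_of_set_def distinct_card)
  have "card (\<Union>e\<in>?I. permutations_of_set e) = (\<Sum>e\<in>?I. card (permutations_of_set e))"
    by (rule card_UN_disjoint[OF finI]) (simp, auto simp: permutations_of_set_def)
  also have "\<dots> = (\<Sum>e\<in>?I. fact k)"
  proof (intro sum.cong refl)
    fix e assume "e \<in> ?I"
    then have "finite e" "card e = k" using assms finite_subset by auto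
    then show "card (permutations_of_set e) = fact k" by simp
  qed
  finally show ?thesis using eq by simp
qed

lemma link_card:
  assumes sb: "semibipartite r m n V1 V2 H" and v: "v \<in> V1" and r1: "r \<ge> 1"
  shows "card {e. e \<subseteq> V2 \<and> card e = r - 1 \<and> insert v e \<in> H} = degree H v"
proof -
  let ?L = "{e. e \<subseteq> V2 \<and> card e = r - 1 \<and> insert v e \<in> H}"
  have disj: "V1 \<inter> V2 = {}" and rg: "\<forall>e\<in>H. e \<subseteq> V1 \<union> V2 \<and> card e = r" and one: "\<forall>e\<in>H. card (e \<inter> V1) = 1"
    using sb unfolding semibipartite_def r_graph_def by auto
  have vn: "v \<notin> e" if "e \<in> ?L" for e using that v disj by auto
  have inj: "inj_on (insert v) ?L"
    by (rule inj_onI) (metis vn Diff_insert_absorb)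
  have "{e\<in>H. v \<in> e} = insert v ` ?L"
  proof
    show "insert v ` ?L \<subseteq> {e\<in>H. v \<in> e}" by auto
    show "{e\<in>H. v \<in> e} \<subseteq> insert v ` ?L"
    proof
      fix e assume e: "e \<in> {e\<in>H. v \<in> e}"
      then have eH: "e \<in> H" "v \<in> e" by auto
      have "card (e \<inter> V1) = 1" using one eH by auto
      then obtain w where w: "e \<inter> V1 = {w}" by (auto simp: card_1_singleton_iff)
      then have ev: "e \<inter> V1 = {v}" using eH v by auto
      have sub: "e - {v} \<subseteq> V2" using rg eH ev by blast
      have fe: "finite e" using rg eH r1 by (metis card.infinite not_one_le_zero)
      have "card (e - {v}) = r - 1" using rg eH fe by (simp add: card_Diff_singleton)
      moreover have "insert v (e - {v}) = e" using eH by auto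
      ultimately show "e \<in> insert v ` ?L" using sub eH by (metis (mono_tags, lifting) image_eqI mem_Collect_eq)
    qed
  qed
  then show ?thesis unfolding degree_def using card_image[OF inj] by simp
qed

lemma count_good:
  assumes sb: "semibipartite r m n V1 V2 H" and r2: "r \<ge> 2" and A: "A \<subseteq> V1" "finite A"
    and a0: "\<alpha> \<ge> 0"
    and deg: "\<forall>v\<in>A. (1 - \<alpha>) * real (n choose (r - 1)) \<le> real (degree H v)"
  shows "real (card {xs. length xs = r - 1 \<and> distinct xs \<and> set xs \<subseteq> V2 - U})
          - real (card A) * (\<alpha> * real n ^ (r - 1)) \<le> real (card (good_lists (r - 1) V2 H A U))"
proof -
  define k where "k = r - 1"
  have finV2: "finite V2" and cV2: "card V2 = n" and disj: "V1 \<inter> V2 = {}"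
    using sb unfolding semibipartite_def by auto
  define DLU where "DLU = {xs. length xs = k \<and> distinct xs \<and> set xs \<subseteq> V2 - U}"
  define Bad where "Bad v = {xs. length xs = k \<and> distinct xs \<and> set xs \<subseteq> V2 \<and> (\<lambda>e. insert v e \<notin> H) (set xs)}" for v
  have DLUsub: "DLU \<subseteq> good_lists k V2 H A U \<union> (\<Union>v\<in>A. Bad v)"
    unfolding DLU_def Bad_def good_lists_def by auto
  have finDLU: "finite DLU" unfolding DLU_def 
    by (rule finite_subset[OF _ finite_lists_length_eq[OF finV2, of k]]) auto
  have fing: "finite (good_lists k V2 H A U)" unfolding good_lists_def 
    by (rule finite_subset[OF _ finite_lists_length_eq[OF finV2, of k]]) auto
  have finBad: "finite (Bad v)" for v unfolding Bad_def 
    by (rule finite_subset[OF _ finite_lists_length_eq[OF finV2, of k]]) auto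
  have a1: "card DLU \<le> card (good_lists k V2 H A U \<union> (\<Union>v\<in>A. Bad v))"
    using DLUsub fing finBad A by (intro card_mono) auto
  have a2: "card (good_lists k V2 H A U \<union> (\<Union>v\<in>A. Bad v)) \<le> card (good_lists k V2 H A U) + card (\<Union>v\<in>A. Bad v)"
    by (rule card_Un_le)
  have a3: "card (\<Union>v\<in>A. Bad v) \<le> (\<Sum>v\<in>A. card (Bad v))" by (rule card_UN_le[OF A(2)])
  have c1n: "card DLU \<le> card (good_lists k V2 H A U) + (\<Sum>v\<in>A. card (Bad v))"
    using a1 a2 a3 by linarith
  have c1: "real (card DLU) \<le> real (card (good_lists k V2 H A U)) + (\<Sum>v\<in>A. real (card (Bad v)))"
    using c1n by (simp only: of_nat_sum[symmetric] of_nat_add[symmetric] of_nat_le_iff)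
  have DLall: "card {xs. length xs = k \<and> distinct xs \<and> set xs \<subseteq> V2 \<and> (\<lambda>e. True) (set xs)} = fact k * (n choose k)"
    using card_dl_pred[OF finV2, of k "\<lambda>e. True"] n_subsets[OF finV2, of k] cV2 by simp
  have "card {xs. length xs = k \<and> distinct xs \<and> set xs \<subseteq> V2 \<and> (\<lambda>e. True) (set xs)} \<le> card {xs. set xs \<subseteq> V2 \<and> length xs = k}"
    by (rule card_mono[OF finite_lists_length_eq[OF finV2]]) auto
  then have "fact k * (n choose k) \<le> n ^ k"
    using DLall card_lists_length_eq[OF finV2, of k] cV2 by simp
  then have "real (fact k * (n choose k)) \<le> real (n ^ k)" by (simp only: of_nat_le_iff)
  then have ffle: "real (fact k) * real (n choose k) \<le> real n ^ k" by (simp only: of_nat_mult of_nat_power)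
  have badle: "real (card (Bad v)) \<le> \<alpha> * real n ^ k" if vA: "v \<in> A" for v
  proof -
    let ?K = "{e. e \<subseteq> V2 \<and> card e = k}"
    let ?L = "{e. e \<subseteq> V2 \<and> card e = k \<and> insert v e \<in> H}"
    have finK: "finite ?K" by (rule finite_subset[of _ "Pow V2"]) (auto simp: finV2)
    have "{e. e \<subseteq> V2 \<and> card e = k \<and> insert v e \<notin> H} = ?K - ?L" by auto
    then have "card (Bad v) = fact k * card (?K - ?L)"
      unfolding Bad_def using card_dl_pred[OF finV2, of k "\<lambda>e. insert v e \<notin> H"] by simp
    moreover have "card (?K - ?L) = card ?K - card ?L" by (rule card_Diff_subset[OF rev_finite_subset[OF finK]]) auto
    moreover have "card ?K = n choose k" using n_subsets[OF finV2, of k] cV2 by simp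
    moreover have "card ?L = degree H v" using link_card[OF sb _, of v] vA A r2 unfolding k_def by auto
    moreover have "card ?L \<le> card ?K" by (rule card_mono[OF finK]) auto
    ultimately have "real (card (Bad v)) = real (fact k) * (real (n choose k) - real (degree H v))"
      by (simp add: of_nat_diff)
    also have "\<dots> \<le> real (fact k) * (\<alpha> * real (n choose k))"
      using deg vA unfolding k_def by (intro mult_left_mono) (auto simp: algebra_simps)
    also have "\<dots> = \<alpha> * (real (fact k) * real (n choose k))" by simp
    also have "\<dots> \<le> \<alpha> * real n ^ k" using ffle a0 by (intro mult_left_mono) auto
    finally show ?thesis .
  qed
  have "(\<Sum>v\<in>A. real (card (Bad v))) \<le> (\<Sum>v\<in>A. \<alpha> * real n ^ k)" by (rule sum_mono) (rule badle)
  then have "(\<Sum>v\<in>A. real (card (Bad v))) \<le> real (card A) * (\<alpha> * real n ^ k)" by simp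
  then show ?thesis using c1 unfolding DLU_def k_def by linarith
qed



lemma sum_split0:
  fixes r :: nat and s :: "nat \<Rightarrow> nat"
  assumes "r \<ge> 1"
  shows "(\<Sum>l\<in>{1..<r}. s l) = (\<Sum>i<r. s i) - s 0"
proof -
  have "(\<Sum>i<r. s i) = (\<Sum>i\<in>{0..<r}. s i)" by (rule sum.cong) auto
  also have "\<dots> = s 0 + (\<Sum>l\<in>{Suc 0..<r}. s l)" using assms by (subst sum.atLeast_Suc_lessThan) auto
  finally show ?thesis by simp
qed

lemma main_common:
  fixes \<alpha> :: real
  assumes sb: "semibipartite r m n V1 V2 H" and r2: "r \<ge> 2" and s0: "s 0 \<ge> 1"
    and st: "\<And>l. 1 \<le> l \<Longrightarrow> l < r \<Longrightarrow> s l \<le> t" and t1: "t \<ge> 1"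
    and sgpos: "(\<Sum>i<r. s i) - s 0 > 0"
    and mb: "real m \<le> (1 - \<alpha> * real (s 0)) * real (s 0)
               / (real (r - 1) * real ((\<Sum>i<r. s i) - s 0)) * real n"
    and findT: "\<And>A U. A \<subseteq> V1 \<Longrightarrow> card A = s 0 \<Longrightarrow> finite A \<Longrightarrow> U \<subseteq> V2 \<Longrightarrow> finite U
       \<Longrightarrow> real (card U) \<le> (1 - \<alpha> * real (s 0)) * real n / real (r - 1) - real ((\<Sum>i<r. s i) - s 0)
       \<Longrightarrow> \<exists>T. (\<forall>i<r-1. T i \<subseteq> V2 \<and> card (T i) = t)
            \<and> {xs. length xs = r - 1 \<and> (\<forall>i<r-1. xs ! i \<in> T i)} \<subseteq> good_lists (r-1) V2 H A U"
  shows "has_disjoint_ordered_copies r s (m div s 0) V1 V2 H"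
proof -
  define sg where "sg = (\<Sum>i<r. s i) - s 0"
  define M where "M = m div s 0"
  have sgeq: "(\<Sum>l\<in>{1..<r}. s l) = sg" unfolding sg_def using r2 by (intro sum_split0) simp
  have disj: "V1 \<inter> V2 = {}" and finV1: "finite V1" and cV1: "card V1 = m"
    using sb unfolding semibipartite_def by auto
  have Ms: "M * s 0 \<le> m" unfolding M_def by simp
  have mb2: "real m * real sg / real (s 0) \<le> (1 - \<alpha> * real (s 0)) * real n / real (r - 1)"
  proof -
    have K: "real (r - 1) > 0" using r2 by simp
    have G: "real sg > 0" using sgpos unfolding sg_def by (simp only: of_nat_0_less_iff)
    have S: "real (s 0) > 0" using s0 by simp
    from mb have "real m \<le> (1 - \<alpha> * real (s 0)) * real (s 0) / (real (r - 1) * real sg) * real n"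
      unfolding sg_def .
    then have "real m * (real sg / real (s 0)) \<le> (1 - \<alpha> * real (s 0)) * real (s 0) / (real (r - 1) * real sg) * real n * (real sg / real (s 0))"
      using G S by (intro mult_right_mono) auto
    also have "\<dots> = (1 - \<alpha> * real (s 0)) * real n / real (r - 1)"
      using K G S by (simp add: field_simps)
    finally show ?thesis by simp
  qed
  show ?thesis
    unfolding M_def[symmetric]
  proof (rule greedy[OF disj r2])
    fix j U1 U2
    assume j: "j < M" and U1: "U1 \<subseteq> V1" and U2: "U2 \<subseteq> V2" and fU1: "finite U1" and fU2: "finite U2"
      and cU1: "card U1 \<le> j * s 0" and cU2: "card U2 \<le> j * (\<Sum>l\<in>{1..<r}. s l)"
    have "Suc j * s 0 \<le> M * s 0" using j by (intro mult_right_mono) auto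
    then have "card U1 + s 0 \<le> m" using cU1 Ms by simp
    moreover have "card V1 - card U1 \<le> card (V1 - U1)" by (rule diff_card_le_card_Diff[OF fU1])
    ultimately have "s 0 \<le> card (V1 - U1)" using cV1 by linarith
    then obtain A where A: "A \<subseteq> V1 - U1" "card A = s 0" "finite A" by (metis obtain_subset_with_card_n)
    have "real (card U2) \<le> real j * real sg" using cU2 sgeq by (metis of_nat_le_iff of_nat_mult)
    also have "\<dots> \<le> (real m / real (s 0) - 1) * real sg"
    proof (intro mult_right_mono)
      have "real (Suc j) * real (s 0) \<le> real m"
        using \<open>Suc j * s 0 \<le> M * s 0\<close> Ms by (metis of_nat_le_iff of_nat_mult order_trans)
      then have "real (Suc j) \<le> real m / real (s 0)" using s0 by (simp add: field_simps)
      then show "real j \<le> real m / real (s 0) - 1" by simp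
    qed simp
    also have "\<dots> = real m * real sg / real (s 0) - real sg" by (simp add: algebra_simps)
    finally have "real (card U2) \<le> (1 - \<alpha> * real (s 0)) * real n / real (r - 1) - real sg"
      using mb2 by (meson diff_right_mono order_trans)
    then have cu: "real (card U2) \<le> (1 - \<alpha> * real (s 0)) * real n / real (r - 1) - real ((\<Sum>i<r. s i) - s 0)"
      unfolding sg_def .
    have AV: "A \<subseteq> V1" using A(1) by blast
    obtain T where T: "\<forall>i<r-1. T i \<subseteq> V2 \<and> card (T i) = t"
      "{xs. length xs = r - 1 \<and> (\<forall>i<r-1. xs ! i \<in> T i)} \<subseteq> good_lists (r-1) V2 H A U2"
      using findT[OF AV A(2) A(3) U2 fU2 cu] by blast
    obtain W where W: "ordered_copy r s V1 V2 H W" "W 0 = A" "\<forall>l. 1 \<le> l \<and> l < r \<longrightarrow> W l \<subseteq> V2 - U2"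
      using find_copy[of r A V1 s t T V2 H U2, OF r2 AV A(2,3) st t1 T disj] by blast
    show "\<exists>W. ordered_copy r s V1 V2 H W \<and> W 0 \<inter> U1 = {} \<and> (\<forall>l. 1 \<le> l \<and> l < r \<longrightarrow> W l \<inter> U2 = {})"
      using W A(1) by blast
  qed
qed



lemma strict_bernoulli:
  fixes \<beta> :: real
  assumes "k \<ge> 2" "0 < \<beta>" "\<beta> < 1"
  shows "1 - real k * \<beta> < (1 - \<beta>) ^ k"
  using assms(1)
proof (induction k rule: dec_induct)
  case base
  then show ?case using assms by (simp add: power2_eq_square algebra_simps)
next
  case (step k)
  have "1 - real (Suc k) * \<beta> \<le> (1 - real k * \<beta>) * (1 - \<beta>)"
    using assms by (simp add: algebra_simps)
  also have "\<dots> < (1 - \<beta>) ^ k * (1 - \<beta>)"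
    using step.IH assms by (intro mult_strict_right_mono) auto
  finally show ?case by (simp add: mult.commute)
qed

lemma findT_r2:
  fixes \<alpha> :: real
  assumes sb: "semibipartite r m n V1 V2 H" and r2: "r = 2" and A: "A \<subseteq> V1" "finite A" "card A = s 0"
    and U: "U \<subseteq> V2" and a0: "\<alpha> \<ge> 0"
    and deg: "\<forall>v\<in>V1. (1 - \<alpha>) * real (n choose (r - 1)) \<le> real (degree H v)"
    and cu: "real (card U) \<le> (1 - \<alpha> * real (s 0)) * real n / real (r - 1) - real t"
  shows "\<exists>T. (\<forall>i<r-1. T i \<subseteq> V2 \<and> card (T i) = t)
            \<and> {xs. length xs = r - 1 \<and> (\<forall>i<r-1. xs ! i \<in> T i)} \<subseteq> good_lists (r-1) V2 H A U"
proof -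
  have finV2: "finite V2" and cV2: "card V2 = n" using sb unfolding semibipartite_def by auto
  have r1: "r - 1 = 1" using r2 by simp
  have cg: "real (card {xs. length xs = r - 1 \<and> distinct xs \<and> set xs \<subseteq> V2 - U})
          - real (card A) * (\<alpha> * real n ^ (r - 1)) \<le> real (card (good_lists (r - 1) V2 H A U))"
    using count_good[OF sb _ A(1,2) a0] deg A r2 by auto
  have "{xs. length xs = 1 \<and> distinct xs \<and> set xs \<subseteq> V2 - U} = (\<lambda>x. [x]) ` (V2 - U)"
    by (auto simp: length_Suc_conv)
  then have "card {xs. length xs = 1 \<and> distinct xs \<and> set xs \<subseteq> V2 - U} = card (V2 - U)"
    by (simp add: card_image inj_on_def)
  also have "\<dots> = n - card U" using card_Diff_subset[OF finite_subset[OF U finV2] U] cV2 by simp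
  finally have "real (card {xs. length xs = 1 \<and> distinct xs \<and> set xs \<subseteq> V2 - U}) = real n - real (card U)"
    using card_mono[OF finV2 U] cV2 by (simp add: of_nat_diff)
  then have "real t \<le> real (card (good_lists 1 V2 H A U))"
    using cg cu A(3) unfolding r1 by (simp add: algebra_simps)
  then have tle: "t \<le> card (good_lists 1 V2 H A U)" by simp
  let ?G = "good_lists 1 V2 H A U"
  have inj: "inj_on hd ?G" unfolding good_lists_def by (rule inj_onI) (auto simp: length_Suc_conv)
  then have "card (hd ` ?G) = card ?G" by (rule card_image)
  then obtain X where X: "X \<subseteq> hd ` ?G" "card X = t" using tle by (metis obtain_subset_with_card_n)
  have XV: "X \<subseteq> V2" using X(1) unfolding good_lists_def by (auto simp: length_Suc_conv)
  show ?thesis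
  proof (rule exI[of _ "\<lambda>_. X"], unfold r1, intro conjI)
    show "\<forall>i<1. X \<subseteq> V2 \<and> card X = t" using XV X by simp
    show "{xs. length xs = 1 \<and> (\<forall>i<1. xs ! i \<in> X)} \<subseteq> ?G"
    proof
      fix xs assume "xs \<in> {xs. length xs = 1 \<and> (\<forall>i<1. xs ! i \<in> X)}"
      then obtain x where xs: "xs = [x]" "x \<in> X" by (auto simp: length_Suc_conv)
      then obtain ys where ys: "ys \<in> ?G" "hd ys = x" using X(1) by auto
      then have "ys = [x]" unfolding good_lists_def by (auto simp: length_Suc_conv)
      then show "xs \<in> ?G" using ys xs by simp
    qed
  qed
qed



lemma findT_r3:
  fixes \<alpha> \<beta> g :: real
  assumes sb: "semibipartite r m n V1 V2 H" and r3: "r \<ge> 3" and A: "A \<subseteq> V1" "finite A" "card A = s 0"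
    and U: "U \<subseteq> V2" and a0: "\<alpha> \<ge> 0"
    and deg: "\<forall>v\<in>V1. (1 - \<alpha>) * real (n choose (r - 1)) \<le> real (degree H v)"
    and as1: "\<alpha> * real (s 0) < 1"
    and beta: "\<beta> = (1 - \<alpha> * real (s 0)) / real (r - 1)"
    and gdef: "g = (1 - \<beta>) ^ (r - 1) - (1 - real (r - 1) * \<beta>)" and gpos: "g > 0"
    and cu: "real (card U) \<le> \<beta> * real n"
    and nk: "2 * (r - 1) \<le> n" and ng: "2 * real (r - 1) ^ 2 / g \<le> real n"
    and Erd: "\<And>E. E \<subseteq> {xs. set xs \<subseteq> V2 \<and> length xs = r - 1} \<Longrightarrow> g / 2 * real n ^ (r - 1) \<le> real (card E)
       \<Longrightarrow> \<exists>T. (\<forall>i<r-1. T i \<subseteq> V2 \<and> card (T i) = t)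
            \<and> {xs. length xs = r - 1 \<and> (\<forall>i<r-1. xs ! i \<in> T i)} \<subseteq> E"
  shows "\<exists>T. (\<forall>i<r-1. T i \<subseteq> V2 \<and> card (T i) = t)
            \<and> {xs. length xs = r - 1 \<and> (\<forall>i<r-1. xs ! i \<in> T i)} \<subseteq> good_lists (r-1) V2 H A U"
proof -
  define k where "k = r - 1"
  have k2: "k \<ge> 2" using r3 unfolding k_def by simp
  have finV2: "finite V2" and cV2: "card V2 = n" using sb unfolding semibipartite_def by auto
  have bpos: "\<beta> > 0" using as1 r3 beta by simp
  have bhalf: "\<beta> \<le> 1 / 2"
  proof -
    have "\<beta> \<le> 1 / real k" using beta a0 k2 unfolding k_def
      by (simp add: divide_right_mono) 
    also have "\<dots> \<le> 1 / 2" using k2 by (simp add: field_simps)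
    finally show ?thesis .
  qed
  have sa: "real (s 0) * \<alpha> = 1 - real k * \<beta>" using beta k2 unfolding k_def by (simp add: field_simps)
  define N' where "N' = card (V2 - U)"
  have finU: "finite U" using finite_subset[OF U finV2] .
  have N'eq: "real N' = real n - real (card U)"
    unfolding N'_def using card_Diff_subset[OF finU U] card_mono[OF finV2 U] cV2 by (simp add: of_nat_diff)
  have N'low: "(1 - \<beta>) * real n \<le> real N'" using N'eq cu by (simp add: algebra_simps)
  have N'up: "real N' \<le> real n" using N'eq by simp
  have "real k \<le> real n / 2" using nk unfolding k_def by simp
  also have "\<dots> \<le> (1 - \<beta>) * real n"
  proof -
    have "\<beta> * real n \<le> 1 / 2 * real n" using bhalf by (intro mult_right_mono) auto
    then show ?thesis by (simp add: algebra_simps)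
  qed
  finally have "real k \<le> real N'" using N'low by linarith
  then have kN': "k \<le> card (V2 - U)" unfolding N'_def by simp
  have dl: "real N' ^ k - real k ^ 2 * real N' ^ (k - 1) \<le> real (card {xs. length xs = k \<and> distinct xs \<and> set xs \<subseteq> V2 - U})"
    using card_distinct_lists_ge[OF _ kN'] finV2 unfolding N'_def by simp
  have cg: "real (card {xs. length xs = k \<and> distinct xs \<and> set xs \<subseteq> V2 - U})
          - real (s 0) * (\<alpha> * real n ^ k) \<le> real (card (good_lists k V2 H A U))"
    using count_good[OF sb _ A(1,2) a0, of U] deg A r3 unfolding k_def by auto
  have p1: "((1 - \<beta>) * real n) ^ k \<le> real N' ^ k"
    using N'low bhalf by (intro power_mono) auto
  have p2: "real N' ^ (k - 1) \<le> real n ^ (k - 1)"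
    using N'up by (intro power_mono) auto
  have nk1: "real n ^ k = real n * real n ^ (k - 1)" using k2 by (cases k) auto
  have "g * real n ^ k - real k ^ 2 * real n ^ (k - 1) \<le> real (card (good_lists k V2 H A U))"
  proof -
    have "g * real n ^ k = (1 - \<beta>) ^ k * real n ^ k - real (s 0) * (\<alpha> * real n ^ k)"
    proof -
      have g2: "g = (1 - \<beta>) ^ k - real (s 0) * \<alpha>" using gdef sa unfolding k_def by simp
      show ?thesis unfolding g2 by (simp add: algebra_simps)
    qed
    moreover have "(1 - \<beta>) ^ k * real n ^ k \<le> real N' ^ k" using p1 by (simp add: power_mult_distrib)
    moreover have "real k ^ 2 * real N' ^ (k - 1) \<le> real k ^ 2 * real n ^ (k - 1)"
      using p2 by (intro mult_left_mono) auto
    ultimately show ?thesis using dl cg by linarith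
  qed
  moreover have "g / 2 * real n ^ k \<le> g * real n ^ k - real k ^ 2 * real n ^ (k - 1)"
  proof -
    have "real k ^ 2 \<le> g / 2 * real n" using ng gpos unfolding k_def by (simp add: field_simps)
    then have "real k ^ 2 * real n ^ (k - 1) \<le> g / 2 * real n * real n ^ (k - 1)"
      by (intro mult_right_mono) auto
    then show ?thesis using nk1 by (simp add: algebra_simps)
  qed
  ultimately have "g / 2 * real n ^ k \<le> real (card (good_lists k V2 H A U))" by linarith
  moreover have "good_lists k V2 H A U \<subseteq> {xs. set xs \<subseteq> V2 \<and> length xs = k}"
    unfolding good_lists_def by auto
  ultimately show ?thesis using Erd unfolding k_def by blast
qed



theorem lemma5p3:
  fixes r :: nat and s :: "nat \<Rightarrow> nat" and \<alpha> :: real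
  assumes "r \<ge> 2"
    and "s 0 \<ge> 2"
    and "\<And>i j. i \<le> j \<Longrightarrow> j < r \<Longrightarrow> s i \<le> s j"
    and "0 \<le> \<alpha>" and "\<alpha> < 1 / real (s 0)"
  shows "\<exists>n0::nat. \<forall>n\<ge>n0. \<forall>(m::nat) (V1::'a set) V2 H.
     semibipartite r m n V1 V2 H \<and>
     real m \<le> (1 - \<alpha> * real (s 0)) * real (s 0)
               / (real (r - 1) * real ((\<Sum>i<r. s i) - s 0)) * real n \<and>
     (\<forall>v\<in>V1. real (degree H v) \<ge> (1 - \<alpha>) * real (n choose (r - 1)))
     \<longrightarrow> has_disjoint_ordered_copies r s (m div s 0) V1 V2 H"
proof -
  note r2 = assms(1) and mono = assms(3) and a0 = assms(4)
  define t where "t = s (r - 1)"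
  have st: "\<And>l. 1 \<le> l \<Longrightarrow> l < r \<Longrightarrow> s l \<le> t" unfolding t_def using mono r2 by simp
  have s01: "s 0 \<ge> 1" using assms(2) by simp
  have t1: "t \<ge> 1" unfolding t_def using mono[of 0 "r - 1"] assms(2) r2 by simp
  have sgeq: "(\<Sum>i<r. s i) - s 0 = (\<Sum>l\<in>{1..<r}. s l)" using sum_split0[of r s] r2 by simp
  have "s 1 \<le> (\<Sum>l\<in>{1..<r}. s l)" using r2 by (intro member_le_sum) auto
  moreover have "s 1 \<ge> 2" using mono[of 0 1] assms(2) r2 by simp
  ultimately have sgpos: "(\<Sum>i<r. s i) - s 0 > 0" using sgeq by simp
  have as1: "\<alpha> * real (s 0) < 1" using assms(5) s01 by (simp add: field_simps)
  show ?thesis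
  proof (cases "r = 2")
    case True
    have sgt: "(\<Sum>i<r. s i) - s 0 = t" using True unfolding t_def by (simp add: numeral_2_eq_2)
    show ?thesis
    proof (rule exI[of _ 0], intro allI impI)
      fix n m and V1 :: "'a set" and V2 H
      assume Hy: "semibipartite r m n V1 V2 H \<and>
         real m \<le> (1 - \<alpha> * real (s 0)) * real (s 0) / (real (r - 1) * real ((\<Sum>i<r. s i) - s 0)) * real n \<and>
         (\<forall>v\<in>V1. real (degree H v) \<ge> (1 - \<alpha>) * real (n choose (r - 1)))"
      then have sb: "semibipartite r m n V1 V2 H" by blast
      show "has_disjoint_ordered_copies r s (m div s 0) V1 V2 H"
      proof (rule main_common[OF sb r2 s01 st t1 sgpos])
        show "real m \<le> (1 - \<alpha> * real (s 0)) * real (s 0) / (real (r - 1) * real ((\<Sum>i<r. s i) - s 0)) * real n"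
          using Hy by blast
      next
        fix A U
        assume A: "A \<subseteq> V1" "card A = s 0" "finite A" and U: "U \<subseteq> V2" "finite U"
          and cu: "real (card U) \<le> (1 - \<alpha> * real (s 0)) * real n / real (r - 1) - real ((\<Sum>i<r. s i) - s 0)"
        show "\<exists>T. (\<forall>i<r-1. T i \<subseteq> V2 \<and> card (T i) = t)
            \<and> {xs. length xs = r - 1 \<and> (\<forall>i<r-1. xs ! i \<in> T i)} \<subseteq> good_lists (r-1) V2 H A U"
          by (rule findT_r2[where s = s and t = t, OF sb True A(1,3,2) U(1) a0]) (use Hy cu sgt in auto)
      qed
    qed
  next
    case False
    then have r3: "r \<ge> 3" using r2 by simp
    define \<beta> where "\<beta> = (1 - \<alpha> * real (s 0)) / real (r - 1)"
    define g where "g = (1 - \<beta>) ^ (r - 1) - (1 - real (r - 1) * \<beta>)"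
    have bpos: "\<beta> > 0" using as1 r3 unfolding \<beta>_def by simp
    have "\<beta> \<le> 1 / real (r - 1)" unfolding \<beta>_def using a0 r3 by (simp add: divide_right_mono)
    also have "\<dots> < 1" using r3 by simp
    finally have blt: "\<beta> < 1" .
    have gpos: "g > 0" unfolding g_def using strict_bernoulli[of "r - 1" \<beta>] r3 bpos blt by simp
    have "\<forall>c::real. c > 0 \<longrightarrow> (\<exists>N::nat. \<forall>(V::'a set) E. finite V \<and> N \<le> card V
     \<and> E \<subseteq> {xs. set xs \<subseteq> V \<and> length xs = r - 1} \<and> c * real (card V) ^ (r - 1) \<le> real (card E)
     \<longrightarrow> (\<exists>T. (\<forall>i<r - 1. T i \<subseteq> V \<and> card (T i) = t)
            \<and> {xs. length xs = r - 1 \<and> (\<forall>i<r - 1. xs ! i \<in> T i)} \<subseteq> E))"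
      by (rule erdos_lists[OF t1])
    then obtain N :: nat where N: "\<forall>(V::'a set) E. finite V \<and> N \<le> card V
     \<and> E \<subseteq> {xs. set xs \<subseteq> V \<and> length xs = r - 1} \<and> g / 2 * real (card V) ^ (r - 1) \<le> real (card E)
     \<longrightarrow> (\<exists>T. (\<forall>i<r - 1. T i \<subseteq> V \<and> card (T i) = t)
            \<and> {xs. length xs = r - 1 \<and> (\<forall>i<r - 1. xs ! i \<in> T i)} \<subseteq> E)"
      using gpos by (meson half_gt_zero)
    define n0 where "n0 = max N (max (2 * (r - 1)) (nat \<lceil>2 * real (r - 1) ^ 2 / g\<rceil>))"
    show ?thesis
    proof (rule exI[of _ n0], intro allI impI)
      fix n m and V1 :: "'a set" and V2 H
      assume nn0: "n \<ge> n0"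
      assume Hy: "semibipartite r m n V1 V2 H \<and>
         real m \<le> (1 - \<alpha> * real (s 0)) * real (s 0) / (real (r - 1) * real ((\<Sum>i<r. s i) - s 0)) * real n \<and>
         (\<forall>v\<in>V1. real (degree H v) \<ge> (1 - \<alpha>) * real (n choose (r - 1)))"
      then have sb: "semibipartite r m n V1 V2 H" by blast
      have finV2: "finite V2" and cV2: "card V2 = n" using sb unfolding semibipartite_def by auto
      have nN: "N \<le> n" and nk: "2 * (r - 1) \<le> n" using nn0 unfolding n0_def by auto
      have ng: "2 * real (r - 1) ^ 2 / g \<le> real n" using nn0 unfolding n0_def by linarith
      show "has_disjoint_ordered_copies r s (m div s 0) V1 V2 H"
      proof (rule main_common[OF sb r2 s01 st t1 sgpos])
        show "real m \<le> (1 - \<alpha> * real (s 0)) * real (s 0) / (real (r - 1) * real ((\<Sum>i<r. s i) - s 0)) * real n"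
          using Hy by blast
      next
        fix A U
        assume A: "A \<subseteq> V1" "card A = s 0" "finite A" and U: "U \<subseteq> V2" "finite U"
          and cu: "real (card U) \<le> (1 - \<alpha> * real (s 0)) * real n / real (r - 1) - real ((\<Sum>i<r. s i) - s 0)"
        have cu2: "real (card U) \<le> \<beta> * real n" using cu unfolding \<beta>_def by simp
        show "\<exists>T. (\<forall>i<r-1. T i \<subseteq> V2 \<and> card (T i) = t)
            \<and> {xs. length xs = r - 1 \<and> (\<forall>i<r-1. xs ! i \<in> T i)} \<subseteq> good_lists (r-1) V2 H A U"
        proof (rule findT_r3[where s = s and t = t, OF sb r3 A(1,3,2) U(1) a0 _ as1 \<beta>_def g_def gpos cu2 nk ng])
          show "\<forall>v\<in>V1. (1 - \<alpha>) * real (n choose (r - 1)) \<le> real (degree H v)" using Hy by blast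
        next
          fix E assume "E \<subseteq> {xs. set xs \<subseteq> V2 \<and> length xs = r - 1}" "g / 2 * real n ^ (r - 1) \<le> real (card E)"
          then show "\<exists>T. (\<forall>i<r-1. T i \<subseteq> V2 \<and> card (T i) = t)
            \<and> {xs. length xs = r - 1 \<and> (\<forall>i<r-1. xs ! i \<in> T i)} \<subseteq> E"
            using N finV2 nN cV2 by auto
        qed
      qed
    qed
  qed
qed


end
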